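(* For every $N\ge 2$, $\mathbb{E}[\mathcal{N}_1(N)]=N/2$, and for every $N\ge 3$, $$\mathbb{E}[\mathcal{N}_1(N)^2]=\frac{N(3N+1)}{12},\qquad \operatorname{Var}[\mathcal{N}_1(N)]=\frac{N}{12}.$$
   Context: A random recursive hypergraph (RRH) is the random hypergraph process defined as follows. At size $N=1$ it has vertex set $\{v_1\}$ and edge set $\{\{v_1\}\}$. Given the hypergraph of size $N$ (vertices $v_1,\dots,v_N$, exactly $N$ edges), one chooses an existing edge $e$ uniformly at random, independently of the past, and adds a new vertex $v_{N+1}$ together with the new edge $e\cup\{v_{N+1}\}$. The degree of a vertex is the number of edges containing it. $\mathcal{N}_k(N)$ denotes the number of vertices of degree $k$ in the RRH of size $N$. *)

theory Defs
  imports "HOL-Probability.Probability"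
begin

text \<open>A hypergraph of size N is represented by its list of N edges; its vertices are
  0, ..., N-1 (vertex v_(i+1) of the paper is the natural number i).
  Edges are sets of vertices; the edge list is ordered by creation time.\<close>

type_synonym hgraph = "nat set list"

definition rrh_step :: "hgraph \<Rightarrow> hgraph pmf" where
  "rrh_step H = map_pmf (\<lambda>i. H @ [insert (length H) (H ! i)]) (pmf_of_set {..<length H})"

text \<open>The random recursive hypergraph of size N (size 0 is a dummy value).\<close>
fun rrh :: "nat \<Rightarrow> hgraph pmf" where
  "rrh 0 = return_pmf []"
| "rrh (Suc 0) = return_pmf [{0}]"
| "rrh (Suc (Suc n)) = bind_pmf (rrh (Suc n)) rrh_step"

definition degree :: "hgraph \<Rightarrow> nat \<Rightarrow> nat" where
  "degree H v = card {i. i < length H \<and> v \<in> H ! i}"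

definition numdeg :: "nat \<Rightarrow> hgraph \<Rightarrow> nat" where
  "numdeg k H = card {v. v < length H \<and> degree H v = k}"

end

theory Submission imports Defs begin

definition inv :: "hgraph \<Rightarrow> bool" where
  "inv H \<longleftrightarrow> length H > 0 \<and> (\<forall>i<length H. i \<in> H!i \<and> H!i \<subseteq> {..i})"

lemma set_step: "length H > 0 \<Longrightarrow> set_pmf (rrh_step H) = (\<lambda>i. H @ [insert (length H) (H ! i)]) ` {..<length H}"
  unfolding rrh_step_def by (simp add: set_pmf_of_set lessThan_empty_iff)

lemma inv_step:
  assumes "inv H" "i < length H"
  shows "inv (H @ [insert (length H) (H ! i)])"
proof -
  have "j \<in> (H @ [insert (length H) (H ! i)]) ! j \<and> (H @ [insert (length H) (H ! i)]) ! j \<subseteq> {..j}"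
    if j: "j < length (H @ [insert (length H) (H ! i)])" for j
  proof (cases "j < length H")
    case True then show ?thesis using assms by (auto simp: inv_def nth_append)
  next
    case False
    then have "j = length H" using j by simp
    moreover have "H!i \<subseteq> {..i}" using assms by (auto simp: inv_def)
    ultimately show ?thesis using assms(2) by (auto simp: nth_append)
  qed
  then show ?thesis unfolding inv_def by auto
qed

lemma inv_sub: "inv H \<Longrightarrow> j < length H \<Longrightarrow> v \<in> H!j \<Longrightarrow> v \<le> j"
  unfolding inv_def by auto

lemma deg_pos: "inv H \<Longrightarrow> v < length H \<Longrightarrow> degree H v \<ge> 1"
proof -
  assume a: "inv H" "v < length H"
  then have "v \<in> {j. j < length H \<and> v \<in> H!j}" by (auto simp: inv_def)
  then have "{j. j < length H \<and> v \<in> H!j} \<noteq> {}" by blast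
  then show ?thesis unfolding degree_def by (simp add: Suc_le_eq card_gt_0_iff)
qed

lemma rrh_inv: "H \<in> set_pmf (rrh (Suc n)) \<Longrightarrow> inv H \<and> length H = Suc n"
proof (induction n arbitrary: H)
  case 0 then show ?case by (auto simp: inv_def)
next
  case (Suc n)
  then obtain G where G: "G \<in> set_pmf (rrh (Suc n))" "H \<in> set_pmf (rrh_step G)" by auto
  with Suc.IH have "inv G" "length G = Suc n" by auto
  with G(2) set_step[of G] obtain i where "i < length G" "H = G @ [insert (length G) (G ! i)]" by auto
  then show ?case using inv_step[OF \<open>inv G\<close>] \<open>length G = Suc n\<close> by auto
qed

lemma rrh_finite: "finite (set_pmf (rrh (Suc n)))"
proof (induction n)
  case (Suc n)
  have "finite (set_pmf (rrh_step H))" if "H \<in> set_pmf (rrh (Suc n))" for H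
    using rrh_inv[OF that] by (simp add: set_step inv_def)
  then show ?case using Suc by simp
qed simp

lemma deg_new:
  assumes "inv H" "i < length H" "v < length H"
  shows "degree (H @ [insert (length H) (H ! i)]) v = degree H v + (if v \<in> H!i then 1 else 0)"
proof -
  let ?N = "length H"
  have "{j. j < length (H @ [insert ?N (H ! i)]) \<and> v \<in> (H @ [insert ?N (H ! i)]) ! j}
      = {j. j < ?N \<and> v \<in> H!j} \<union> (if v \<in> H!i then {?N} else {})"
    using assms(3) by (auto simp: nth_append less_Suc_eq)
  then show ?thesis unfolding degree_def by (simp add: card_insert_if)
qed

lemma deg_newN:
  assumes "inv H" "i < length H"
  shows "degree (H @ [insert (length H) (H ! i)]) (length H) = 1"
proof -
  let ?N = "length H"
  have "{j. j < length (H @ [insert ?N (H ! i)]) \<and> ?N \<in> (H @ [insert ?N (H ! i)]) ! j} = {?N}"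
  proof -
    have "?N \<notin> H!j" if "j < ?N" for j using inv_sub[OF assms(1) that] that by fastforce
    then show ?thesis by (auto simp: nth_append less_Suc_eq)
  qed
  then show ?thesis unfolding degree_def by simp
qed

lemma deg_ge2:
  assumes "inv H" "i < length H" "v \<in> H!i" "v \<noteq> i"
  shows "degree H v \<ge> 2"
proof -
  have "v < i" using assms inv_sub[OF assms(1) assms(2) assms(3)] by simp
  then have "{v, i} \<subseteq> {j. j < length H \<and> v \<in> H!j}" using assms by (auto simp: inv_def)
  from card_mono[OF _ this] assms(4) show ?thesis unfolding degree_def by simp
qed

lemma numdeg_step:
  assumes "inv H" "i < length H"
  shows "numdeg 1 (H @ [insert (length H) (H ! i)]) =
     (if degree H i = 1 then numdeg 1 H else numdeg 1 H + 1)"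
proof -
  let ?N = "length H" let ?H = "H @ [insert ?N (H ! i)]"
  have ii: "i \<in> H!i" using assms by (auto simp: inv_def)
  have "{v. v < length ?H \<and> degree ?H v = 1} =
     insert ?N ({v. v < ?N \<and> degree H v = 1} - (if degree H i = 1 then {i} else {}))"
  proof (intro set_eqI iffI)
    fix v assume v: "v \<in> {v. v < length ?H \<and> degree ?H v = 1}"
    show "v \<in> insert ?N ({v. v < ?N \<and> degree H v = 1} - (if degree H i = 1 then {i} else {}))"
    proof (cases "v = ?N")
      case False
      then have "v < ?N" using v by auto
      then show ?thesis using v deg_new[OF assms \<open>v < ?N\<close>] ii deg_pos[OF assms(1) \<open>v < ?N\<close>] by (auto split: if_splits)
    qed simp
  next
    fix v assume v: "v \<in> insert ?N ({v. v < ?N \<and> degree H v = 1} - (if degree H i = 1 then {i} else {}))"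
    show "v \<in> {v. v < length ?H \<and> degree ?H v = 1}"
    proof (cases "v = ?N")
      case True then show ?thesis using deg_newN[OF assms] by simp
    next
      case False
      then have vl: "v < ?N" "degree H v = 1" "degree H i = 1 \<longrightarrow> v \<noteq> i" using v by (auto split: if_splits)
      have "v \<notin> H!i"
      proof
        assume vi: "v \<in> H!i"
        show False
        proof (cases "v = i")
          case True then show False using vl by simp
        next
          case False then show False using deg_ge2[OF assms vi] vl by simp
        qed
      qed
      then show ?thesis using deg_new[OF assms vl(1)] vl by simp
    qed
  qed
  note eq = this
  have fin: "finite {v. v < ?N \<and> degree H v = 1}" by simp
  define D where "D = {v. v < ?N \<and> degree H v = 1} - (if degree H i = 1 then {i} else {})"
  have nD: "?N \<notin> D" unfolding D_def by simp
  have fD: "finite D" unfolding D_def using fin by simp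
  have "numdeg 1 ?H = card (insert ?N D)" unfolding numdeg_def eq D_def ..
  also have "\<dots> = Suc (card D)" using card_insert_disjoint[OF fD nD] .
  finally have c: "numdeg 1 ?H = Suc (card ({v. v < ?N \<and> degree H v = 1} - (if degree H i = 1 then {i} else {})))"
    unfolding D_def .
  show ?thesis
  proof (cases "degree H i = 1")
    case True
    then have iA: "i \<in> {v. v < ?N \<and> degree H v = 1}" using assms(2) by simp
    then have "card {v. v < ?N \<and> degree H v = 1} > 0" using fin card_gt_0_iff by blast
    then show ?thesis using c True iA fin unfolding numdeg_def by (simp add: card_Diff_singleton)
  next
    case False
    then show ?thesis using c unfolding numdeg_def by simp
  qed
qed


lemma exp_bind:
  fixes h :: "'b \<Rightarrow> real"
  assumes "finite A" "set_pmf p \<subseteq> A" "\<And>x. x \<in> A \<Longrightarrow> finite (set_pmf (f x))"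
  shows "measure_pmf.expectation (p \<bind> f) h = measure_pmf.expectation p (\<lambda>x. measure_pmf.expectation (f x) h)"
  apply (subst pmf_expectation_bind[OF assms(1) assms(3) assms(2)], assumption)
  apply (subst integral_measure_pmf[OF assms(1)])
  using assms(2) by auto

lemma exp_cong:
  fixes f g :: "'a \<Rightarrow> real"
  assumes "\<And>x. x \<in> set_pmf p \<Longrightarrow> f x = g x"
  shows "measure_pmf.expectation p f = measure_pmf.expectation p g"
  using assms by (intro integral_cong_AE) (auto simp: AE_measure_pmf_iff)

lemma exp_step:
  fixes g :: "hgraph \<Rightarrow> real"
  assumes "inv H"
  shows "measure_pmf.expectation (rrh_step H) g = (\<Sum>i<length H. g (H @ [insert (length H) (H ! i)])) / length H"
  using assms unfolding rrh_step_def inv_def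
  by (simp add: integral_pmf_of_set lessThan_empty_iff)

lemma sum_ind: "(\<Sum>i<(n::nat). (if P i then 1 else 0::real)) = real (card {i. i < n \<and> P i})"
proof (induction n)
  case (Suc n)
  have "{i. i < Suc n \<and> P i} = (if P n then insert n {i. i < n \<and> P i} else {i. i < n \<and> P i})"
    by (auto simp: less_Suc_eq)
  then show ?case using Suc by simp
qed simp

lemma step1:
  assumes "inv H"
  shows "measure_pmf.expectation (rrh_step H) (\<lambda>G. real (numdeg 1 G))
     = real (numdeg 1 H) + 1 - real (numdeg 1 H) / real (length H)"
proof -
  let ?X = "real (numdeg 1 H)" let ?N = "length H"
  have N: "?N > 0" using assms by (simp add: inv_def)
  have "(\<Sum>i<?N. real (numdeg 1 (H @ [insert ?N (H ! i)]))) = (\<Sum>i<?N. ?X + 1 - (if degree H i = 1 then 1 else 0))"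
    using numdeg_step[OF assms] by (intro sum.cong) auto
  also have "\<dots> = ?N * (?X + 1) - ?X"
    by (simp add: sum_subtractf sum_ind numdeg_def)
  finally show ?thesis using N by (simp add: exp_step[OF assms] field_simps)
qed

lemma step2:
  assumes "inv H"
  shows "measure_pmf.expectation (rrh_step H) (\<lambda>G. (real (numdeg 1 G))^2)
     = (real (numdeg 1 H) + 1)^2 - (2 * real (numdeg 1 H) + 1) * real (numdeg 1 H) / real (length H)"
proof -
  let ?X = "real (numdeg 1 H)" let ?N = "length H"
  have N: "?N > 0" using assms by (simp add: inv_def)
  have "(\<Sum>i<?N. (real (numdeg 1 (H @ [insert ?N (H ! i)])))^2) = (\<Sum>i<?N. (?X + 1)^2 - (2 * ?X + 1) * (if degree H i = 1 then 1 else 0))"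
    using numdeg_step[OF assms] by (intro sum.cong) (auto simp: power2_eq_square algebra_simps)
  also have "\<dots> = ?N * (?X + 1)^2 - (2 * ?X + 1) * ?X"
    by (simp add: sum_subtractf sum_ind numdeg_def sum_distrib_left[symmetric])
  finally show ?thesis using N by (simp add: exp_step[OF assms] field_simps)
qed

definition m :: "nat \<Rightarrow> real" where "m n = measure_pmf.expectation (rrh n) (\<lambda>H. real (numdeg 1 H))"
definition s :: "nat \<Rightarrow> real" where "s n = measure_pmf.expectation (rrh n) (\<lambda>H. (real (numdeg 1 H))^2)"

lemma integrable_rrh[simp]: "integrable (measure_pmf (rrh (Suc n))) (f :: hgraph \<Rightarrow> real)"
  by (rule integrable_measure_pmf_finite[OF rrh_finite])

lemma bind_rrh:
  fixes g :: "hgraph \<Rightarrow> real"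
  shows "measure_pmf.expectation (rrh (Suc (Suc n))) g
     = measure_pmf.expectation (rrh (Suc n)) (\<lambda>H. measure_pmf.expectation (rrh_step H) g)"
proof -
  have "finite (set_pmf (rrh_step H))" if "H \<in> set_pmf (rrh (Suc n))" for H
    using rrh_inv[OF that] by (simp add: set_step inv_def)
  then show ?thesis by (simp only: rrh.simps, intro exp_bind[OF rrh_finite]) auto
qed

lemma m_rec: "m (Suc (Suc n)) = m (Suc n) + 1 - m (Suc n) / real (Suc n)"
proof -
  have "m (Suc (Suc n)) = measure_pmf.expectation (rrh (Suc n))
      (\<lambda>H. real (numdeg 1 H) + 1 - real (numdeg 1 H) / real (Suc n))"
    unfolding m_def bind_rrh
  proof (intro exp_cong)
    fix H assume "H \<in> set_pmf (rrh (Suc n))"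
    from rrh_inv[OF this] show "measure_pmf.expectation (rrh_step H) (\<lambda>H. real (numdeg 1 H)) =
      real (numdeg 1 H) + 1 - real (numdeg 1 H) / real (Suc n)" using step1 by metis
  qed
  also have "\<dots> = m (Suc n) + 1 - m (Suc n) / real (Suc n)"
    unfolding m_def by simp
  finally show ?thesis .
qed

lemma s_rec: "s (Suc (Suc n)) = s (Suc n) + 2 * m (Suc n) + 1 - (2 * s (Suc n) + m (Suc n)) / real (Suc n)"
proof -
  have "s (Suc (Suc n)) = measure_pmf.expectation (rrh (Suc n))
      (\<lambda>H. (real (numdeg 1 H))^2 + 2 * real (numdeg 1 H) + 1 - (2 * (real (numdeg 1 H))^2 + real (numdeg 1 H)) / real (Suc n))"
    unfolding s_def bind_rrh
  proof (intro exp_cong)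
    fix H assume "H \<in> set_pmf (rrh (Suc n))"
    from rrh_inv[OF this] have "measure_pmf.expectation (rrh_step H) (\<lambda>H. (real (numdeg 1 H))^2) =
      (real (numdeg 1 H) + 1)^2 - (2 * real (numdeg 1 H) + 1) * real (numdeg 1 H) / real (Suc n)" using step2 by metis
    then show "measure_pmf.expectation (rrh_step H) (\<lambda>H. (real (numdeg 1 H))^2) =
      (real (numdeg 1 H))^2 + 2 * real (numdeg 1 H) + 1 - (2 * (real (numdeg 1 H))^2 + real (numdeg 1 H)) / real (Suc n)"
      by (simp add: power2_eq_square algebra_simps add_divide_distrib diff_divide_distrib)
  qed
  also have "\<dots> = s (Suc n) + 2 * m (Suc n) + 1 - (2 * s (Suc n) + m (Suc n)) / real (Suc n)"
    unfolding m_def s_def by simp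
  finally show ?thesis .
qed


lemma numdeg_base: "numdeg 1 [{0}] = 1"
proof -
  have e: "{i. i < length [{0::nat}] \<and> 0 \<in> [{0::nat}] ! i} = {0}" by auto
  have "degree [{0}] 0 = 1" unfolding degree_def e by simp
  moreover have "{v. v < length [{0::nat}] \<and> degree [{0}] v = 1} = {0}" using calculation by auto
  ultimately show ?thesis unfolding numdeg_def by simp
qed

lemma m1: "m (Suc 0) = 1" unfolding m_def using numdeg_base by simp
lemma s1: "s (Suc 0) = 1" unfolding s_def using numdeg_base by simp

lemma m_closed: "m (Suc (Suc k)) = real (Suc (Suc k)) / 2"
proof (induction k)
  case 0 show ?case using m_rec[of 0] m1 by simp
next
  case (Suc k)
  have h: "m (Suc (Suc k)) / real (Suc (Suc k)) = 1/2" unfolding Suc by simp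
  have "m (Suc (Suc (Suc k))) = m (Suc (Suc k)) + 1/2" using m_rec[of "Suc k"] h by linarith
  then show ?case unfolding Suc by simp
qed

lemma s2: "s (Suc (Suc 0)) = 1" using s_rec[of 0] s1 m1 by simp

lemma s_closed: "s (Suc (Suc (Suc k))) = real (Suc (Suc (Suc k))) * (3 * real (Suc (Suc (Suc k))) + 1) / 12"
proof (induction k)
  case 0 show ?case using s_rec[of "Suc 0"] s2 m_closed[of 0] by (simp add: numeral_2_eq_2)
next
  case (Suc k)
  have h: "(2 * s (Suc (Suc (Suc k))) + m (Suc (Suc (Suc k)))) / real (Suc (Suc (Suc k)))
      = (3 * real k + 10) / 6 + 1/2"
    unfolding Suc m_closed[of "Suc k"] by (simp add: field_simps)
  have "s (Suc (Suc (Suc (Suc k)))) = s (Suc (Suc (Suc k))) + 2 * m (Suc (Suc (Suc k))) + 1 - ((3 * real k + 10) / 6 + 1/2)"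
    using s_rec[of "Suc (Suc k)"] h by linarith
  then show ?case unfolding Suc m_closed[of "Suc k"] by (simp add: field_simps)
qed

theorem mainTheorem2:
  shows "(\<forall>N::nat. N \<ge> 2 \<longrightarrow>
            measure_pmf.expectation (rrh N) (\<lambda>H. real (numdeg 1 H)) = real N / 2)
       \<and> (\<forall>N::nat. N \<ge> 3 \<longrightarrow>
            measure_pmf.expectation (rrh N) (\<lambda>H. (real (numdeg 1 H))^2)
              = real N * (3 * real N + 1) / 12
          \<and> measure_pmf.variance (rrh N) (\<lambda>H. real (numdeg 1 H)) = real N / 12)"
proof (intro conjI allI impI)
  fix N :: nat assume "N \<ge> 2"
  then obtain k where "N = Suc (Suc k)" by (metis add_2_eq_Suc le_Suc_ex)
  then show "measure_pmf.expectation (rrh N) (\<lambda>H. real (numdeg 1 H)) = real N / 2"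
    using m_closed[of k] unfolding m_def by simp
next
  fix N :: nat assume "N \<ge> 3"
  define k where "k = N - 3"
  with \<open>N \<ge> 3\<close> have N: "N = Suc (Suc (Suc k))" by simp
  then show "measure_pmf.expectation (rrh N) (\<lambda>H. (real (numdeg 1 H))^2) = real N * (3 * real N + 1) / 12"
    using s_closed[of k] unfolding s_def by simp
next
  fix N :: nat assume "N \<ge> 3"
  define k where "k = N - 3"
  with \<open>N \<ge> 3\<close> have N: "N = Suc (Suc (Suc k))" by simp
  have "measure_pmf.variance (rrh N) (\<lambda>H. real (numdeg 1 H)) = s N - (m N)^2"
    unfolding s_def m_def N by (subst measure_pmf.variance_eq) (simp_all del: rrh.simps)
  also have "\<dots> = real N / 12"
  proof -
    have a: "m N = real N / 2" using m_closed[of "Suc k"] N by simp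
    have b: "s N = real N * (3 * real N + 1) / 12" using s_closed[of k] N by simp
    show ?thesis unfolding a b by (simp add: field_simps power2_eq_square)
  qed
  finally show "measure_pmf.variance (rrh N) (\<lambda>H. real (numdeg 1 H)) = real N / 12" .
qed

end
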